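(* Let $r=2$, $F$ free on $x,y$, and let $c=[[x,y],[[x,y],y]]\in F_5$. Let $\phi$ be the endomorphism of $F$ with $x\mapsto xc$, $y\mapsto y$. Then $\phi$ is not an automorphism of $F$ (it extends to an element of $B_4$ not coming from $A_4$), although $\widetilde D\phi-$ has trace $\partial c/\partial x\in\varpi^4$ whose image in $\varpi^4/\varpi^5\cong\mathcal R_4$ lies in $\mathcal R_4^+$; i.e. $J=D\phi$ satisfies $J-\mathbb 1\in M_2(\varpi^4)$ and $\tau(\operatorname{tr}(J-\mathbb 1))\bmod \varpi^5\in\mathcal R_4^+$, yet $J$ is not invertible over $\mathbb ZF$.
   Context: $[u,v]=u^{-1}v^{-1}uv$; $F_1=F$, $F_{n+1}=[F_n,F]$. $A_n=\ker(\mathrm{Aut}(F)\to\mathrm{Aut}(F/F_{n+1}))$; $B_n$ is the kernel of $\mathrm{Aut}_{\mathrm{cont}}(\hat F)\to\mathrm{Aut}(\hat F/\hat F_{n+1})$ for the pronilpotent completion $\hat F$. Fox derivatives: additive maps $\partial/\partial x_j$ on $\mathbb ZF$ with $\partial x_j/\partial x_j=1$, $\partial x_l/\partial x_j=0$ ($l\ne j$), $\partial(uv)/\partial x_j=\frac{\partial u}{\partial x_j}o(v)+u\frac{\partial v}{\partial x_j}$, $o$ the augmentation, $\varpi=\ker o$. The Jacobian of an endomorphism is $D\phi=(\partial(x_i^\phi)/\partial x_j)_{i,j}$, $\widetilde D\phi=D\phi-\mathbb 1$. $\tau:\mathbb ZF\to\mathbb Z\langle\langle X,Y\rangle\rangle$,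 $x\mapsto1+X$, $y\mapsto1+Y$, identifies $\varpi^4/\varpi^5$ with the degree-4 part $\mathcal R_4$. $\mathcal R_4^+=\mathcal R_4(1-\gamma)$ where $\gamma$ cyclically rotates monomials, $(Z_1Z_2Z_3Z_4)^\gamma=Z_2Z_3Z_4Z_1$. *)

theory Defs
  imports Main
begin

text \<open>A letter is (g, e): generator g (False = x, True = y), e = True means inverse.\<close>
type_synonym letter = "bool \<times> bool"
type_synonym word = "letter list"

definition inv_letter :: "letter \<Rightarrow> letter" where
  "inv_letter l = (fst l, \<not> snd l)"

fun reduced :: "word \<Rightarrow> bool" where
  "reduced (a # b # w) = (b \<noteq> inv_letter a \<and> reduced (b # w))"
| "reduced _ = True"

definition red_cons :: "letter \<Rightarrow> word \<Rightarrow> word" where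
  "red_cons l w = (case w of [] \<Rightarrow> [l] | l' # w' \<Rightarrow> (if l' = inv_letter l then w' else l # w))"

definition gmult :: "word \<Rightarrow> word \<Rightarrow> word" where
  "gmult u v = foldr red_cons u v"

definition ginv :: "word \<Rightarrow> word" where
  "ginv u = rev (map inv_letter u)"

definition Fgrp :: "word set" where
  "Fgrp = {w. reduced w}"

definition gen_x :: word where "gen_x = [(False, False)]"
definition gen_y :: word where "gen_y = [(True, False)]"

definition comm :: "word \<Rightarrow> word \<Rightarrow> word" where
  "comm u v = gmult (ginv u) (gmult (ginv v) (gmult u v))"

text \<open>Lower central series: F_1 = F, F_(n+1) = [F_n, F] (subgroup generated by commutators).\<close>
inductive lcs :: "nat \<Rightarrow> word \<Rightarrow> bool" where
  base: "reduced w \<Longrightarrow> lcs (Suc 0) w"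
| commI: "lcs n a \<Longrightarrow> reduced b \<Longrightarrow> lcs (Suc n) (comm a b)"
| multI: "lcs (Suc n) a \<Longrightarrow> lcs (Suc n) b \<Longrightarrow> lcs (Suc n) (gmult a b)"
| invI: "lcs (Suc n) a \<Longrightarrow> lcs (Suc n) (ginv a)"

definition letter_img :: "(bool \<Rightarrow> word) \<Rightarrow> letter \<Rightarrow> word" where
  "letter_img f l = (if snd l then ginv (f (fst l)) else f (fst l))"

definition endo :: "(bool \<Rightarrow> word) \<Rightarrow> word \<Rightarrow> word" where
  "endo f w = foldr (\<lambda>l acc. gmult (letter_img f l) acc) w []"

type_synonym zf = "word \<Rightarrow> int"

definition zf_elem :: "zf \<Rightarrow> bool" where
  "zf_elem a \<longleftrightarrow> finite {u. a u \<noteq> 0} \<and> (\<forall>u. a u \<noteq> 0 \<longrightarrow> reduced u)"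

definition of_grp :: "word \<Rightarrow> zf" where
  "of_grp w = (\<lambda>v. if v = w then 1 else 0)"

definition zf_zero :: zf where "zf_zero = (\<lambda>_. 0)"
definition zf_one :: zf where "zf_one = of_grp []"
definition zf_add :: "zf \<Rightarrow> zf \<Rightarrow> zf" where "zf_add a b = (\<lambda>v. a v + b v)"
definition zf_neg :: "zf \<Rightarrow> zf" where "zf_neg a = (\<lambda>v. - a v)"
definition zf_sub :: "zf \<Rightarrow> zf \<Rightarrow> zf" where "zf_sub a b = (\<lambda>v. a v - b v)"

definition zf_mult :: "zf \<Rightarrow> zf \<Rightarrow> zf" where
  "zf_mult a b = (\<lambda>v. \<Sum>p\<in>{(u, u'). a u \<noteq> 0 \<and> b u' \<noteq> 0 \<and> gmult u u' = v}.
                        a (fst p) * b (snd p))"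

definition aug :: "zf \<Rightarrow> int" where
  "aug a = (\<Sum>u\<in>{u. a u \<noteq> 0}. a u)"

definition aug_ideal :: "zf set" where
  "aug_ideal = {a. zf_elem a \<and> aug a = 0}"

inductive aug_pow :: "nat \<Rightarrow> zf \<Rightarrow> bool" where
  base: "zf_elem a \<Longrightarrow> aug_pow 0 a"
| prod: "aug_pow n a \<Longrightarrow> b \<in> aug_ideal \<Longrightarrow> aug_pow (Suc n) (zf_mult a b)"
| zero: "aug_pow (Suc n) zf_zero"
| add: "aug_pow (Suc n) a \<Longrightarrow> aug_pow (Suc n) b \<Longrightarrow> aug_pow (Suc n) (zf_add a b)"
| neg: "aug_pow (Suc n) a \<Longrightarrow> aug_pow (Suc n) (zf_neg a)"

definition fox_letter :: "bool \<Rightarrow> letter \<Rightarrow> zf" where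
  "fox_letter j l = (if fst l \<noteq> j then zf_zero
                     else if snd l then zf_neg (of_grp [l]) else zf_one)"

fun fox :: "bool \<Rightarrow> word \<Rightarrow> zf" where
  "fox j [] = zf_zero"
| "fox j (l # w) = zf_add (fox_letter j l) (zf_mult (of_grp [l]) (fox j w))"

type_synonym mat2 = "bool \<Rightarrow> bool \<Rightarrow> zf"

definition gen :: "bool \<Rightarrow> word" where
  "gen i = [(i, False)]"

definition jacobian :: "(bool \<Rightarrow> word) \<Rightarrow> mat2" where
  "jacobian f = (\<lambda>i j. fox j (endo f (gen i)))"

definition mat_one :: mat2 where
  "mat_one = (\<lambda>i j. if i = j then zf_one else zf_zero)"

definition mat_mult :: "mat2 \<Rightarrow> mat2 \<Rightarrow> mat2" where
  "mat_mult A B = (\<lambda>i k. zf_add (zf_mult (A i False) (B False k)) (zf_mult (A i True) (B True k)))"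

definition mat_invertible :: "mat2 \<Rightarrow> bool" where
  "mat_invertible A \<longleftrightarrow> (\<exists>B. (\<forall>i j. zf_elem (B i j)) \<and> mat_mult A B = mat_one \<and> mat_mult B A = mat_one)"

definition mat_trace :: "mat2 \<Rightarrow> zf" where
  "mat_trace A = zf_add (A False False) (A True True)"

section \<open>Magnus map tau: x -> 1+X, y -> 1+Y, into Z<<X,Y>>\<close>

text \<open>Monomials in X (False), Y (True) are bool lists; a power series is a coefficient function.\<close>
definition mag_letter :: "letter \<Rightarrow> bool list \<Rightarrow> int" where
  "mag_letter l m = (if \<not> snd l then (if m = [] \<or> m = [fst l] then 1 else 0)
                     else (if set m \<subseteq> {fst l} then (-1) ^ length m else 0))"

fun mag :: "word \<Rightarrow> bool list \<Rightarrow> int" where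
  "mag [] m = (if m = [] then 1 else 0)"
| "mag (l # w) m = (\<Sum>i\<le>length m. mag_letter l (take i m) * mag w (drop i m))"

definition tau :: "zf \<Rightarrow> bool list \<Rightarrow> int" where
  "tau a m = (\<Sum>u\<in>{u. a u \<noteq> 0}. a u * mag u m)"

text \<open>Degree-4 homogeneous part (identifies \<open>\<varpi>^4/\<varpi>^5\<close> with R_4).\<close>
definition deg4_part :: "(bool list \<Rightarrow> int) \<Rightarrow> bool list \<Rightarrow> int" where
  "deg4_part s = (\<lambda>m. if length m = 4 then s m else 0)"

text \<open>gamma: (Z1 Z2 Z3 Z4)^gamma = Z2 Z3 Z4 Z1, extended linearly.\<close>
definition gamma :: "(bool list \<Rightarrow> int) \<Rightarrow> bool list \<Rightarrow> int" where
  "gamma p = (\<lambda>m. \<Sum>w\<in>{w. length w = 4 \<and> rotate1 w = m}. p w)"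

definition R4 :: "(bool list \<Rightarrow> int) set" where
  "R4 = {p. \<forall>m. length m \<noteq> 4 \<longrightarrow> p m = 0}"

definition R4plus :: "(bool list \<Rightarrow> int) set" where
  "R4plus = {q. \<exists>p\<in>R4. q = (\<lambda>m. p m - gamma p m)}"

definition c_elem :: word where
  "c_elem = comm (comm gen_x gen_y) (comm (comm gen_x gen_y) gen_y)"

definition phi_gens :: "bool \<Rightarrow> word" where
  "phi_gens i = (if i then gen_y else gmult gen_x c_elem)"

end

theory Submission
  imports Defs
begin


lemma inv_inv[simp]: "inv_letter (inv_letter l) = l"
  by (cases l) (simp add: inv_letter_def)

lemma inv_neq[simp]: "inv_letter l \<noteq> l" "l \<noteq> inv_letter l"
  by (cases l, simp add: inv_letter_def)+

lemma reduced_Cons: "reduced (a # w) \<longleftrightarrow> reduced w \<and> (w = [] \<or> hd w \<noteq> inv_letter a)"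
  by (cases w) auto

lemma reduced_red_cons[simp]: "reduced w \<Longrightarrow> reduced (red_cons l w)"
  by (cases w) (auto simp: red_cons_def reduced_Cons)

lemma gmult_Cons: "gmult (l # u) v = red_cons l (gmult u v)"
  by (simp add: gmult_def)

lemma gmult_Nil[simp]: "gmult [] v = v"
  by (simp add: gmult_def)

lemma reduced_gmult[simp]: "reduced v \<Longrightarrow> reduced (gmult u v)"
  by (induction u) (auto simp: gmult_Cons)

lemma gmult_append: "gmult (u @ v) w = gmult u (gmult v w)"
  by (simp add: gmult_def)

lemma red_cons_cancel: "reduced z \<Longrightarrow> red_cons l (red_cons (inv_letter l) z) = z"
proof (cases z)
  case Nil then show ?thesis by (simp add: red_cons_def)
next
  case (Cons a z')
  assume r: "reduced z"
  show ?thesis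
  proof (cases "a = l")
    case True
    with r Cons show ?thesis
      by (cases z') (auto simp: red_cons_def)
  next
    case False
    with Cons show ?thesis by (auto simp: red_cons_def)
  qed
qed

lemma gmult_red_cons: "reduced w \<Longrightarrow> gmult (red_cons l v) w = red_cons l (gmult v w)"
proof (cases v)
  case Nil then show ?thesis by (simp add: red_cons_def gmult_Cons)
next
  case (Cons a v')
  assume r: "reduced w"
  show ?thesis
  proof (cases "a = inv_letter l")
    case True
    then have "red_cons l v = v'" using Cons by (simp add: red_cons_def)
    moreover have "gmult v w = red_cons (inv_letter l) (gmult v' w)" using Cons True by (simp add: gmult_Cons)
    ultimately show ?thesis using red_cons_cancel[of "gmult v' w" l] r by simp
  next
    case False
    then have "red_cons l v = l # v" using Cons by (simp add: red_cons_def)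
    then show ?thesis by (simp add: gmult_Cons)
  qed
qed

lemma gmult_assoc: "reduced w \<Longrightarrow> gmult (gmult u v) w = gmult u (gmult v w)"
  by (induction u) (auto simp: gmult_Cons gmult_red_cons)

lemma gmult_reduced_append: "reduced (u @ v) \<Longrightarrow> gmult u v = u @ v"
proof (induction u)
  case Nil then show ?case by simp
next
  case (Cons a u)
  then have r: "reduced (u @ v)" by (simp add: reduced_Cons)
  with Cons show ?case
    by (cases "u @ v") (auto simp: gmult_Cons red_cons_def reduced_Cons)
qed

lemma gmult_Nil_right[simp]: "reduced u \<Longrightarrow> gmult u [] = u"
  using gmult_reduced_append[of u "[]"] by simp

lemma reduced_snoc: "reduced (w @ [a]) \<longleftrightarrow> reduced w \<and> (w = [] \<or> a \<noteq> inv_letter (last w))"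
proof (induction w rule: reduced.induct)
  case (1 a' b w) then show ?case by auto
next
  case ("2_1") then show ?case by simp
next
  case ("2_2" v) then show ?case by (auto simp: inv_letter_def)
qed

lemma ginv_Cons: "ginv (l # u) = ginv u @ [inv_letter l]"
  by (simp add: ginv_def)

lemma ginv_Nil[simp]: "ginv [] = []" by (simp add: ginv_def)

lemma ginv_ginv[simp]: "ginv (ginv u) = u"
  by (simp add: ginv_def rev_map comp_def)

lemma last_ginv: "u \<noteq> [] \<Longrightarrow> last (ginv u) = inv_letter (hd u)"
  by (cases u) (auto simp: ginv_def)

lemma ginv_eq_Nil[simp]: "ginv u = [] \<longleftrightarrow> u = []"
  by (simp add: ginv_def)

lemma reduced_ginv[simp]: "reduced u \<Longrightarrow> reduced (ginv u)"
proof (induction u)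
  case Nil then show ?case by simp
next
  case (Cons a u)
  then show ?case
    by (auto simp: ginv_Cons reduced_snoc reduced_Cons last_ginv ginv_eq_Nil)
qed

lemma gmult_ginv_cancel[simp]: "reduced w \<Longrightarrow> gmult (ginv u) (gmult u w) = w"
proof (induction u)
  case Nil then show ?case by simp
next
  case (Cons a u)
  then show ?case
    using red_cons_cancel[of "gmult u w" "inv_letter a"]
    by (simp add: ginv_Cons gmult_append gmult_Cons)
qed

lemma gmult_cancel_ginv[simp]: "reduced w \<Longrightarrow> gmult u (gmult (ginv u) w) = w"
  using gmult_ginv_cancel[of w "ginv u"] by simp

lemma gmult_ginv_right[simp]: "reduced u \<Longrightarrow> gmult u (ginv u) = []"
  using gmult_cancel_ginv[of "[]" u] by simp

lemma gmult_ginv_left[simp]: "reduced u \<Longrightarrow> gmult (ginv u) u = []"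
  using gmult_ginv_cancel[of "[]" u] by simp



lemma reduced_comm[simp]: "reduced b \<Longrightarrow> reduced (comm a b)"
  by (simp add: comm_def)

lemma lcs_reduced: "lcs n w \<Longrightarrow> reduced w"
  by (induction rule: lcs.induct) auto

lemma lcs_desc_aux:
  "\<forall>w. lcs (Suc (Suc n)) w \<longrightarrow> lcs (Suc n) w"
proof (induction n)
  case 0
  have "lcs m w \<Longrightarrow> m = Suc (Suc 0) \<Longrightarrow> lcs (Suc 0) w" for m w
    by (induction rule: lcs.induct) (auto intro: lcs.intros lcs_reduced)
  then show ?case by auto
next
  case (Suc n)
  have "lcs m w \<Longrightarrow> m = Suc (Suc (Suc n)) \<Longrightarrow> lcs (Suc (Suc n)) w" for m w
  proof (induction rule: lcs.induct)
    case (commI k a b)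
    then have "lcs (Suc n) a" using Suc by auto
    then show ?case using commI lcs.commI by auto
  qed (auto intro: lcs.intros)
  then show ?case by auto
qed

lemma lcs_desc: "lcs (Suc (Suc n)) w \<Longrightarrow> lcs (Suc n) w"
  using lcs_desc_aux by blast

lemma lcs_Nil: "lcs (Suc n) []"
proof (induction n)
  case 0 then show ?case by (auto intro: lcs.base)
next
  case (Suc n)
  have "comm [] [] = []" by (simp add: comm_def)
  then show ?case using lcs.commI[OF Suc, of "[]"] by simp
qed

lemma lcs_normal:
  assumes h: "lcs (Suc n) h" and g: "reduced g"
  shows "lcs (Suc n) (gmult g (gmult h (ginv g)))"
proof -
  have rh: "reduced h" using h lcs_reduced by auto
  have "lcs (Suc (Suc n)) (comm h (ginv g))" using lcs.commI[OF h] g by simp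
  then have "lcs (Suc n) (comm h (ginv g))" by (rule lcs_desc)
  then have "lcs (Suc n) (gmult h (comm h (ginv g)))" using lcs.multI h by blast
  moreover have "gmult h (comm h (ginv g)) = gmult g (gmult h (ginv g))"
    using rh g by (simp add: comm_def)
  ultimately show ?thesis by simp
qed

definition "wA = comm gen_x gen_y"
definition "wB = comm wA gen_y"
definition "hx = comm wB gen_x"
definition "hy = comm wB gen_y"
definition "xi = [(False,True)]"
definition "yi = [(True,True)]"

lemma lcs3B: "lcs 3 wB"
proof -
  have "lcs (Suc 0) gen_x" by (rule lcs.base) (simp add: gen_x_def)
  then have "lcs (Suc (Suc 0)) wA" unfolding wA_def by (rule lcs.commI) (simp add: gen_y_def)
  then have "lcs (Suc (Suc (Suc 0))) wB" unfolding wB_def by (rule lcs.commI) (simp add: gen_y_def)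
  then show ?thesis by (simp add: numeral_eq_Suc)
qed

lemma lcs4: "reduced g \<Longrightarrow> lcs 4 (comm wB g)"
  using lcs.commI[OF lcs3B] by (simp add: numeral_eq_Suc)

lemma lcs5: "reduced g \<Longrightarrow> lcs 4 h \<Longrightarrow> lcs 5 (comm h g)"
  using lcs.commI by (simp add: numeral_eq_Suc)

lemma lcs5_mult: "lcs 5 a \<Longrightarrow> lcs 5 b \<Longrightarrow> lcs 5 (gmult a b)"
  using lcs.multI by (simp add: numeral_eq_Suc)

lemma lcs5_inv: "lcs 5 a \<Longrightarrow> lcs 5 (ginv a)"
  using lcs.invI by (simp add: numeral_eq_Suc)

lemma lcs5_conj: "lcs 5 a \<Longrightarrow> reduced g \<Longrightarrow> lcs 5 (gmult g (gmult a (ginv g)))"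
  using lcs_normal[of 4] by (simp add: numeral_eq_Suc)

lemma red_simps: "reduced gen_x" "reduced gen_y" "reduced xi" "reduced yi"
  by (simp_all add: gen_x_def gen_y_def xi_def yi_def inv_letter_def)

definition "E1 = comm (comm wB xi) (gmult yi (gmult gen_x gen_y))"
definition "E2 = comm (comm wB yi) (gmult gen_x gen_y)"
definition "E3 = comm hx gen_y"
definition "Exx = comm hx xi"
definition "Eyy = comm hy yi"
definition "Q = gmult E3 (ginv Eyy)"
definition "K = gmult (comm hx (ginv hy)) (gmult (gmult hy (gmult Q (ginv hy))) (gmult E2 (ginv Exx)))"

lemma c_decomp: "c_elem = ginv (gmult (gmult hx (gmult K (ginv hx))) E1)"
  by (simp add: c_elem_def K_def Q_def E1_def E2_def E3_def Exx_def Eyy_def hx_def hy_def wB_def wA_def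
      xi_def yi_def gen_x_def gen_y_def comm_def gmult_def ginv_def red_cons_def inv_letter_def)

lemma lcs5_c: "lcs 5 c_elem"
proof -
  have rhx: "reduced hx" "reduced hy" by (simp_all add: hx_def hy_def red_simps)
  have h4: "lcs 4 hx" "lcs 4 hy" using lcs4 red_simps by (simp_all add: hx_def hy_def)
  have "lcs 4 (comm wB xi)" "lcs 4 (comm wB yi)" using lcs4 red_simps by auto
  then have e: "lcs 5 E1" "lcs 5 E2" unfolding E1_def E2_def
    by (auto intro!: lcs5 simp: red_simps)
  have e2: "lcs 5 E3" "lcs 5 Exx" "lcs 5 Eyy" unfolding E3_def Exx_def Eyy_def
    using h4 by (auto intro!: lcs5 simp: red_simps)
  have "lcs 5 Q" unfolding Q_def using e2 by (auto intro!: lcs5_mult lcs5_inv)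
  then have "lcs 5 K" unfolding K_def using e e2 h4 rhx
    by (auto intro!: lcs5_mult lcs5_inv lcs5_conj lcs5)
  then have "lcs 5 (ginv (gmult (gmult hx (gmult K (ginv hx))) E1))"
    using e rhx by (auto intro!: lcs5_mult lcs5_inv lcs5_conj)
  then show ?thesis using c_decomp by simp
qed



lemma endo_Nil[simp]: "endo f [] = []" by (simp add: endo_def)
lemma endo_Cons: "endo f (l # w) = gmult (letter_img f l) (endo f w)" by (simp add: endo_def)
lemma reduced_endo[simp]: "reduced (endo f w)"
  by (induction w) (simp_all add: endo_Cons)

lemma reduced_c[simp]: "reduced c_elem"
  using lcs5_c lcs_reduced by blast

lemma reduced_phi[simp]: "reduced (phi_gens i)"
  by (simp add: phi_gens_def gen_y_def)

lemma reduced_img[simp]: "reduced (letter_img phi_gens l)"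
  by (simp add: letter_img_def)

lemma lcs5_letter:
  "lcs 5 (gmult (letter_img phi_gens l) [inv_letter l])"
proof -
  obtain g e where l: "l = (g, e)" by (cases l)
  show ?thesis
  proof (cases g)
    case True
    then show ?thesis using l lcs_Nil[of 4]
      by (cases e) (simp_all add: letter_img_def phi_gens_def gen_y_def inv_letter_def
          gmult_def red_cons_def ginv_def numeral_eq_Suc)
  next
    case False
    show ?thesis
    proof (cases e)
      case False
      have "lcs 5 (gmult gen_x (gmult c_elem (ginv gen_x)))"
        by (rule lcs5_conj[OF lcs5_c]) (simp add: red_simps)
      moreover have "gmult (gmult gen_x c_elem) [inv_letter l] = gmult gen_x (gmult c_elem (ginv gen_x))"
        using l \<open>\<not> g\<close> False
        by (simp add: gmult_assoc gen_x_def ginv_def inv_letter_def)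
      ultimately show ?thesis using l \<open>\<not> g\<close> False by (simp add: letter_img_def phi_gens_def)
    next
      case True
      have "gmult (ginv (gmult gen_x c_elem)) [(False,False)] = ginv c_elem"
        by (simp add: c_elem_def gen_x_def gen_y_def comm_def gmult_def ginv_def red_cons_def inv_letter_def)
      then show ?thesis using l \<open>\<not> g\<close> True lcs5_inv[OF lcs5_c]
        by (simp add: letter_img_def phi_gens_def inv_letter_def)
    qed
  qed
qed

lemma part2: "reduced w \<Longrightarrow> lcs 5 (gmult (endo phi_gens w) (ginv w))"
proof (induction w)
  case Nil then show ?case using lcs_Nil[of 4] by (simp add: numeral_eq_Suc)
next
  case (Cons l w)
  have rw: "reduced w" using Cons.prems by (simp add: reduced_Cons)
  define e where "e = gmult (endo phi_gens w) (ginv w)"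
  define p where "p = letter_img phi_gens l"
  have le: "lcs 5 e" using Cons rw e_def by simp
  have rl: "reduced [inv_letter l]" by simp
  have gi: "ginv (l # w) = gmult (ginv w) [inv_letter l]"
  proof -
    have "ginv (l # w) = ginv w @ [inv_letter l]" by (simp add: ginv_Cons)
    moreover have "reduced (ginv (l # w))" using Cons.prems by simp
    ultimately show ?thesis using gmult_reduced_append by metis
  qed
  have "gmult (endo phi_gens (l # w)) (ginv (l # w)) = gmult p (gmult e [inv_letter l])"
    unfolding gi e_def p_def endo_Cons
    by (simp add: gmult_assoc rw)
  also have "\<dots> = gmult (gmult p [inv_letter l]) (gmult [l] (gmult e [inv_letter l]))"
  proof -
    have "gmult [inv_letter l] (gmult [l] (gmult e [inv_letter l])) = gmult e [inv_letter l]"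
      using gmult_ginv_cancel[of "gmult e [inv_letter l]" "[l]"] by (simp add: ginv_def)
    then show ?thesis by (simp add: gmult_assoc)
  qed
  finally have eq: "gmult (endo phi_gens (l # w)) (ginv (l # w)) =
      gmult (gmult p [inv_letter l]) (gmult [l] (gmult e (ginv [l])))" by (simp add: ginv_def)
  have "lcs 5 (gmult [l] (gmult e (ginv [l])))" by (rule lcs5_conj[OF le]) simp
  then show ?case unfolding eq p_def by (rule lcs5_mult[OF lcs5_letter])
qed



definition zl :: "(int \<times> word) list \<Rightarrow> zf" where
  "zl L = (\<lambda>v. sum_list (map (\<lambda>p. if snd p = v then fst p else 0) L))"

definition ev :: "(int \<times> word) list \<Rightarrow> (word \<Rightarrow> int) \<Rightarrow> int" where
  "ev L g = sum_list (map (\<lambda>p. fst p * g (snd p)) L)"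

definition mulL :: "(int \<times> word) list \<Rightarrow> (int \<times> word) list \<Rightarrow> (int \<times> word) list" where
  "mulL L M = concat (map (\<lambda>p. map (\<lambda>q. (fst p * fst q, gmult (snd p) (snd q))) M) L)"

lemma zl_Nil: "zl [] = zf_zero" by (simp add: zl_def zf_zero_def)
lemma zl_Cons: "zl (p # L) v = (if snd p = v then fst p else 0) + zl L v" by (simp add: zl_def)
lemma zl_append: "zl (L @ M) = zf_add (zl L) (zl M)" by (simp add: zl_def zf_add_def)
lemma of_grp_zl: "of_grp w = zl [(1, w)]" by (auto simp: zl_def of_grp_def)
lemma zf_one_zl: "zf_one = zl [(1, [])]" by (simp add: zf_one_def of_grp_zl)
lemma zf_zero_zl: "zf_zero = zl []" by (simp add: zl_Nil)

definition negL :: "(int \<times> word) list \<Rightarrow> (int \<times> word) list" where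
  "negL L = map (\<lambda>p. (- fst p, snd p)) L"

lemma zl_neg: "zf_neg (zl L) = zl (negL L)"
  by (induction L) (auto simp: zl_def zf_neg_def negL_def fun_eq_iff)

lemma zl_add: "zf_add (zl L) (zl M) = zl (L @ M)" by (simp add: zl_append)

lemma zl_sub: "zf_sub (zl L) (zl M) = zl (L @ negL M)"
  using zl_neg[of M] by (simp add: zl_append zf_sub_def zf_add_def zf_neg_def fun_eq_iff)

lemma supp_zl: "{u. zl L u \<noteq> 0} \<subseteq> set (map snd L)"
proof (induction L)
  case Nil then show ?case by (simp add: zl_def)
next
  case (Cons p L) then show ?case by (auto simp: zl_Cons split: if_splits)
qed

lemma finite_supp_zl: "finite {u. zl L u \<noteq> 0}"
  using supp_zl finite_subset by blast

lemma sum_zl: "finite S \<Longrightarrow> set (map snd L) \<subseteq> S \<Longrightarrow> (\<Sum>u\<in>S. zl L u * g u) = ev L g"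
proof (induction L)
  case Nil then show ?case by (simp add: zl_def ev_def)
next
  case (Cons p L)
  have e: "zl (p # L) u * g u = (if snd p = u then fst p * g u else 0) + zl L u * g u" for u
    by (simp add: zl_Cons distrib_right)
  have "(\<Sum>u\<in>S. zl (p # L) u * g u) = (\<Sum>u\<in>S. (if snd p = u then fst p * g u else 0)) + (\<Sum>u\<in>S. zl L u * g u)"
    unfolding e by (rule sum.distrib)
  also have "\<dots> = fst p * g (snd p) + ev L g" using Cons by (simp add: sum.delta)
  finally show ?case by (simp add: ev_def)
qed

lemma sum_supp: fixes a g :: "word \<Rightarrow> int" shows "finite S \<Longrightarrow> {u. a u \<noteq> 0} \<subseteq> S \<Longrightarrow> (\<Sum>u\<in>{u. a u \<noteq> 0}. a u * g u) = (\<Sum>u\<in>S. a u * g u)"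
  by (rule sum.mono_neutral_left) auto

lemma ev_cong: assumes "zl L = zl M" shows "ev L g = ev M g"
proof -
  let ?S = "set (map snd L) \<union> set (map snd M)"
  have "ev L g = (\<Sum>u\<in>?S. zl L u * g u)" by (rule sum_zl[symmetric]) auto
  also have "\<dots> = (\<Sum>u\<in>?S. zl M u * g u)" using assms by simp
  also have "\<dots> = ev M g" by (rule sum_zl) auto
  finally show ?thesis .
qed

lemma ev_append: "ev (L @ M) g = ev L g + ev M g" by (simp add: ev_def)
lemma ev_Nil: "ev [] g = 0" by (simp add: ev_def)

lemma ev_mulL: "ev (mulL L M) g = ev L (\<lambda>u. ev M (\<lambda>u'. g (gmult u u')))"
  by (induction L) (auto simp: ev_def mulL_def sum_list_const_mult mult.assoc comp_def)

lemma zl_eval: "zl L v = ev L (\<lambda>u. if u = v then 1 else 0)"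
  by (induction L) (auto simp: zl_def ev_def)

lemma zl_mult: "zf_mult (zl L) (zl M) = zl (mulL L M)"
proof
  fix v
  let ?WL = "set (map snd L)" and ?WM = "set (map snd M)"
  let ?Sv = "{(u, u'). zl L u \<noteq> 0 \<and> zl M u' \<noteq> 0 \<and> gmult u u' = v}"
  have sub: "?Sv \<subseteq> ?WL \<times> ?WM" using supp_zl[of L] supp_zl[of M] by auto
  have "zf_mult (zl L) (zl M) v = (\<Sum>p\<in>?Sv. zl L (fst p) * zl M (snd p))" by (simp add: zf_mult_def)
  also have "\<dots> = (\<Sum>p\<in>?WL \<times> ?WM. if gmult (fst p) (snd p) = v then zl L (fst p) * zl M (snd p) else 0)"
    by (rule sum.mono_neutral_cong_left) (use sub in auto)
  also have "\<dots> = (\<Sum>u\<in>?WL. \<Sum>u'\<in>?WM. if gmult u u' = v then zl L u * zl M u' else 0)"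
    by (simp add: sum.cartesian_product split_def)
  also have "\<dots> = (\<Sum>u\<in>?WL. zl L u * (\<Sum>u'\<in>?WM. zl M u' * (if gmult u u' = v then 1 else 0)))"
    by (simp add: sum_distrib_left if_distrib mult.assoc mult.left_commute cong: if_cong)
  also have "\<dots> = (\<Sum>u\<in>?WL. zl L u * ev M (\<lambda>u'. if gmult u u' = v then 1 else 0))"
    by (simp add: sum_zl)
  also have "\<dots> = ev L (\<lambda>u. ev M (\<lambda>u'. if gmult u u' = v then 1 else 0))"
    by (simp add: sum_zl)
  also have "\<dots> = zl (mulL L M) v" by (simp add: zl_eval ev_mulL)
  finally show "zf_mult (zl L) (zl M) v = zl (mulL L M) v" .
qed

lemma zf_elem_zl: "list_all (\<lambda>p. reduced (snd p)) L \<Longrightarrow> zf_elem (zl L)"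
  using supp_zl[of L] finite_supp_zl[of L]
  by (auto simp: zf_elem_def list_all_iff)

lemma zl_of_elem: assumes "zf_elem a" shows "\<exists>L. a = zl L"
proof -
  have f: "finite {u. a u \<noteq> 0}" using assms by (simp add: zf_elem_def)
  obtain xs where xs: "set xs = {u. a u \<noteq> 0}" "distinct xs" using finite_distinct_list[OF f] by blast
  have "a = zl (map (\<lambda>u. (a u, u)) xs)"
  proof
    fix v
    have "zl (map (\<lambda>u. (a u, u)) xs) v = (\<Sum>u\<leftarrow>xs. if u = v then a u else 0)"
      by (induction xs) (auto simp: zl_def)
    also have "\<dots> = (\<Sum>u\<in>set xs. if u = v then a u else 0)" using xs(2) by (simp add: sum_list_distinct_conv_sum_set)
    also have "\<dots> = (if v \<in> set xs then a v else 0)" using sum.delta[of "set xs" v a] by simp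
    also have "\<dots> = a v" using xs(1) by auto
    finally show "a v = zl (map (\<lambda>u. (a u, u)) xs) v" by simp
  qed
  then show ?thesis by blast
qed

lemma aug_zl: "aug (zl L) = sum_list (map fst L)"
proof -
  have "aug (zl L) = (\<Sum>u\<in>{u. zl L u \<noteq> 0}. zl L u * 1)" by (simp add: aug_def)
  also have "\<dots> = (\<Sum>u\<in>set (map snd L). zl L u * 1)" by (rule sum_supp) (use supp_zl[of L] in auto)
  also have "\<dots> = ev L (\<lambda>_. 1)" by (rule sum_zl) auto
  finally show ?thesis by (simp add: ev_def)
qed

lemma tau_zl: "tau (zl L) m = ev L (\<lambda>u. mag u m)"
proof -
  have "tau (zl L) m = (\<Sum>u\<in>{u. zl L u \<noteq> 0}. zl L u * mag u m)" by (simp add: tau_def)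
  also have "\<dots> = (\<Sum>u\<in>set (map snd L). zl L u * mag u m)" by (rule sum_supp) (use supp_zl[of L] in auto)
  also have "\<dots> = ev L (\<lambda>u. mag u m)" by (rule sum_zl) auto
  finally show ?thesis .
qed

definition foxlet :: "bool \<Rightarrow> letter \<Rightarrow> (int \<times> word) list" where
  "foxlet j l = (if fst l \<noteq> j then [] else if snd l then [(-1, [l])] else [(1, [])])"

fun foxL :: "bool \<Rightarrow> word \<Rightarrow> (int \<times> word) list" where
  "foxL j [] = []"
| "foxL j (l # w) = foxlet j l @ mulL [(1, [l])] (foxL j w)"

lemma fox_letter_zl: "fox_letter j l = zl (foxlet j l)"
  by (simp add: fox_letter_def foxlet_def zl_Nil zf_one_zl zl_neg negL_def of_grp_zl)

lemma fox_zl: "fox j w = zl (foxL j w)"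
  by (induction w) (simp_all add: zl_Nil fox_letter_zl of_grp_zl zl_mult zl_append)



definition permL :: "letter \<Rightarrow> nat list" where
  "permL l = (if \<not> fst l then [0,1,3,2] else if \<not> snd l then [1,2,0,3] else [2,0,1,3])"

definition pl :: "letter \<Rightarrow> nat \<Rightarrow> nat" where
  "pl l i = (if i < 4 then permL l ! i else i)"

fun rho :: "word \<Rightarrow> nat \<Rightarrow> nat" where
  "rho [] = id"
| "rho (l # w) = pl l \<circ> rho w"

lemma less4: "(i::nat) < 4 \<longleftrightarrow> i = 0 \<or> i = 1 \<or> i = 2 \<or> i = 3" by auto

lemma pl_inv: "pl l (pl (inv_letter l) i) = i"
proof (cases "i < 4")
  case True
  then show ?thesis
    by (cases l) (auto simp: pl_def permL_def inv_letter_def less4)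
qed (simp add: pl_def)

lemma rho_red_cons: "rho (red_cons l w) = pl l \<circ> rho w"
  by (cases w) (auto simp: red_cons_def fun_eq_iff pl_inv)

lemma rho_gmult: "rho (gmult u w) = rho u \<circ> rho w"
  by (induction u) (simp_all add: gmult_Cons rho_red_cons comp_assoc)

lemma rho_ge4: "4 \<le> i \<Longrightarrow> rho w i = i"
  by (induction w) (simp_all add: pl_def)

lemma rho_endo3: "rho (endo phi_gens w) 3 = 3"
proof (induction w)
  case Nil then show ?case by simp
next
  case (Cons l w)
  obtain a b where l: "l = (a, b)" by (cases l)
  have "rho (letter_img phi_gens l) 3 = 3"
    unfolding l
    by (cases a; cases b) (simp_all add: letter_img_def phi_gens_def c_elem_def gen_x_def gen_y_def
        comm_def gmult_def ginv_def red_cons_def inv_letter_def pl_def permL_def)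
  then show ?case using Cons by (simp add: endo_Cons rho_gmult)
qed

lemma part3: "\<not> bij_betw (endo phi_gens) Fgrp Fgrp"
proof
  assume "bij_betw (endo phi_gens) Fgrp Fgrp"
  then have "endo phi_gens ` Fgrp = Fgrp" by (simp add: bij_betw_def)
  moreover have "gen_x \<in> Fgrp" by (simp add: Fgrp_def gen_x_def)
  ultimately have "gen_x \<in> endo phi_gens ` Fgrp" by simp
  then obtain w where "gen_x = endo phi_gens w" by blast
  then have "rho gen_x 3 = 3" using rho_endo3 by metis
  then show False by (simp add: gen_x_def pl_def permL_def)
qed

lemma ev_swap: "ev L (\<lambda>u. ev M (\<lambda>u'. f u u')) = ev M (\<lambda>u'. ev L (\<lambda>u. f u u'))"
  by (induction L) (auto simp: ev_def sum_list_const_mult sum_list_addf algebra_simps)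

lemma ev_zero: "ev L (\<lambda>_. 0) = 0" by (induction L) (simp_all add: ev_def)

definition v0 :: "nat \<Rightarrow> int" where
  "v0 k = (if k = 0 then 1 else if k = 1 then -2 else if k = 2 then 1 else 0)"

definition "La = foxL False (gmult gen_x c_elem)"

lemma La_kernel: "ev La (\<lambda>u. v0 (rho u k)) = 0"
proof (cases "k < 4")
  case True
  then show ?thesis unfolding less4
    by (elim disjE) (simp_all add: La_def v0_def ev_def foxlet_def mulL_def c_elem_def gen_x_def gen_y_def
        comm_def gmult_def ginv_def red_cons_def inv_letter_def pl_def permL_def)
next
  case False
  then show ?thesis by (simp add: rho_ge4 v0_def ev_zero)
qed

lemma endo_gen: "endo phi_gens (gen i) = phi_gens i"
  by (simp add: gen_def endo_Cons letter_img_def)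

lemma J_FF: "jacobian phi_gens False False = zl La"
  by (simp add: jacobian_def endo_gen fox_zl La_def phi_gens_def)

lemma J_TF: "jacobian phi_gens True False = zl []"
  by (simp add: jacobian_def endo_gen fox_zl phi_gens_def gen_y_def foxlet_def mulL_def)

lemma J_TT: "jacobian phi_gens True True = zl [(1, [])]"
  by (simp add: jacobian_def endo_gen fox_zl phi_gens_def gen_y_def foxlet_def mulL_def)

lemma part6: "\<not> mat_invertible (jacobian phi_gens)"
proof
  assume "mat_invertible (jacobian phi_gens)"
  then obtain B where B: "\<forall>i j. zf_elem (B i j)" "mat_mult (jacobian phi_gens) B = mat_one"
    by (auto simp: mat_invertible_def)
  obtain P where P: "B False False = zl P" using zl_of_elem B(1) by blast
  obtain Lt where Lt: "B True False = zl Lt" using zl_of_elem B(1) by blast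
  obtain Lb where Lb: "jacobian phi_gens False True = zl Lb"
    using fox_zl by (auto simp: jacobian_def)
  have "mat_mult (jacobian phi_gens) B True False = mat_one True False" using B by simp
  then have "zl (mulL [] P @ mulL [(1, [])] Lt) = zl []"
    by (simp add: mat_mult_def J_TF J_TT P Lt zl_mult zl_add mat_one_def zf_zero_zl)
  then have t: "ev Lt h = 0" for h
    using ev_cong[of _ "[]" h] by (simp add: ev_append ev_mulL mulL_def ev_Nil)
  have "mat_mult (jacobian phi_gens) B False False = mat_one False False" using B by simp
  then have "zl (mulL La P @ mulL Lb Lt) = zl [(1, [])]"
    by (simp add: mat_mult_def J_FF Lb P Lt zl_mult zl_add mat_one_def zf_one_zl)
  then have "ev (mulL La P @ mulL Lb Lt) (\<lambda>u. v0 (rho u 0)) = ev [(1, [])] (\<lambda>u. v0 (rho u 0))"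
    by (rule ev_cong)
  moreover have "ev (mulL Lb Lt) (\<lambda>u. v0 (rho u 0)) = 0"
    by (simp add: ev_mulL t ev_zero)
  moreover have "ev (mulL La P) (\<lambda>u. v0 (rho u 0)) = 0"
    by (simp add: ev_mulL rho_gmult ev_swap[of La P] La_kernel ev_zero)
  ultimately show False by (simp add: ev_append ev_def v0_def)
qed



definition zl_eq :: "(int \<times> word) list \<Rightarrow> (int \<times> word) list \<Rightarrow> bool" where
  "zl_eq L M = list_all (\<lambda>v. zl L v = zl M v) (map snd (L @ M))"

lemma zl_eqD: "zl_eq L M \<Longrightarrow> zl L = zl M"
proof
  fix v assume e: "zl_eq L M"
  show "zl L v = zl M v"
  proof (cases "v \<in> set (map snd (L @ M))")
    case True then show ?thesis using e by (auto simp: zl_eq_def list_all_iff)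
  next
    case False
    then have "zl L v = 0" "zl M v = 0" using supp_zl[of L] supp_zl[of M] by auto
    then show ?thesis by simp
  qed
qed

fun ins :: "int \<times> word \<Rightarrow> (int \<times> word) list \<Rightarrow> (int \<times> word) list" where
  "ins p [] = (if fst p = 0 then [] else [p])"
| "ins p (q # M) = (if snd q = snd p then (if fst p + fst q = 0 then M else (fst p + fst q, snd q) # M)
                    else q # ins p M)"

definition norm :: "(int \<times> word) list \<Rightarrow> (int \<times> word) list" where
  "norm L = foldr ins L []"

definition Dl :: "bool \<Rightarrow> (int \<times> word) list \<Rightarrow> (int \<times> word) list" where
  "Dl j L = norm (concat (map (\<lambda>p. map (\<lambda>q. (fst p * fst q, snd q)) (foxL j (snd p))) L))"

definition "xm = [(1, gen_x), (-1, [])]"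
definition "ym = [(1, gen_y), (-1, [])]"

fun chk :: "nat \<Rightarrow> (int \<times> word) list \<Rightarrow> bool" where
  "chk 0 L = list_all (\<lambda>p. reduced (snd p)) L"
| "chk (Suc k) L = (let A = Dl False L; B = Dl True L in
      chk k A \<and> chk k B \<and> zl_eq L (mulL A xm @ mulL B ym))"

lemma xm_ideal: "zl xm \<in> aug_ideal" "zl ym \<in> aug_ideal"
  by (auto simp: aug_ideal_def xm_def ym_def aug_zl gen_x_def gen_y_def intro!: zf_elem_zl)

lemma chk_sound: "chk k L \<Longrightarrow> aug_pow k (zl L)"
proof (induction k arbitrary: L)
  case 0 then show ?case by (auto intro: aug_pow.base zf_elem_zl)
next
  case (Suc k)
  let ?A = "Dl False L" and ?B = "Dl True L"
  have c: "chk k ?A" "chk k ?B" "zl_eq L (mulL ?A xm @ mulL ?B ym)" using Suc.prems by (simp_all add: Let_def)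
  have "zl L = zf_add (zf_mult (zl ?A) (zl xm)) (zf_mult (zl ?B) (zl ym))"
    using zl_eqD[OF c(3)] by (simp add: zl_mult zl_add)
  moreover have "aug_pow (Suc k) (zf_add (zf_mult (zl ?A) (zl xm)) (zf_mult (zl ?B) (zl ym)))"
    by (intro aug_pow.add aug_pow.prod Suc.IH c xm_ideal)
  ultimately show ?case by simp
qed

definition "Lb = foxL True (gmult gen_x c_elem)"

lemma J_FT: "jacobian phi_gens False True = zl Lb"
  by (simp add: jacobian_def endo_gen fox_zl Lb_def phi_gens_def)

lemma La_eq: "La = [(1, []), (-1, [(False,False),(True,True),(False,True)]), (1, [(False,False),(True,True),(False,True),(True,False)]), (-1, [(False,False),(True,True),(False,True),(True,False),(False,False),(True,True),(True,True),(False,True)]), (1, [(False,False),(True,True),(False,True),(True,False),(False,False),(True,True),(True,True),(False,True),(True,False)]), (-1, [(False,False),(True,True),(False,True),(True,False),(False,False),(True,True),(True,True),(False,True),(True,False),(False,False),(True,False),(False,True)]), (1, [(False,False),(True,True),(False,True),(True,False),(False,False),(True,True),(True,True),(False,True),(True,False),(False,False),(True,False),(False,True),(True,True),(True,True)])]"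
  by (simp add: La_def c_elem_def gen_x_def gen_y_def comm_def gmult_def ginv_def red_cons_def
   inv_letter_def foxlet_def mulL_def)

lemma Lb_eq: "Lb = [(-1, [(False,False),(True,True)]), (1, [(False,False),(True,True),(False,True)]), (-1, [(False,False),(True,True),(False,True),(True,False),(False,False),(True,True)]), (-1, [(False,False),(True,True),(False,True),(True,False),(False,False),(True,True),(True,True)]), (1, [(False,False),(True,True),(False,True),(True,False),(False,False),(True,True),(True,True),(False,True)]), (1, [(False,False),(True,True),(False,True),(True,False),(False,False),(True,True),(True,True),(False,True),(True,False),(False,False)]), (-1, [(False,False),(True,True),(False,True),(True,False),(False,False),(True,True),(True,True),(False,True),(True,False),(False,False),(True,False),(False,True),(True,True)]), (-1, [(False,False),(True,True),(False,True),(True,False),(False,False),(True,True),(True,True),(False,True),(True,False),(False,False),(True,False),(False,True),(True,True),(True,True)]), (1, [(False,False),(True,True),(False,True),(True,False),(False,False),(True,True),(True,True),(False,True),(True,False),(False,False),(True,False),(False,True),(True,True),(True,True),(False,False)]), (1, [(False,False),(True,True),(False,True),(True,False),(False,False),(True,True),(True,True),(False,True),(True,False),(False,False),(True,False),(False,True),(True,True),(True,True),(False,False),(True,False)])]"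
  by (simp add: Lb_def c_elem_def gen_x_def gen_y_def comm_def gmult_def ginv_def red_cons_def
   inv_letter_def foxlet_def mulL_def)

lemmas comp_simps = gen_x_def gen_y_def gmult_def red_cons_def
   inv_letter_def foxlet_def mulL_def negL_def Dl_def norm_def xm_def ym_def zl_eq_def zl_def Let_def

lemma chk1: "chk 4 (La @ negL [(1, [])])"
  unfolding La_eq by (simp add: comp_simps numeral_eq_Suc)

lemma chk2: "chk 4 (Lb @ negL [])"
  unfolding Lb_eq by (simp add: comp_simps numeral_eq_Suc)

lemma chk3: "chk 4 (negL [])" "chk 4 ((1, []) # negL [(1, [])])"
  by (simp_all add: comp_simps numeral_eq_Suc)

lemma part4: "\<forall>i j. aug_pow 4 (zf_sub (jacobian phi_gens i j) (mat_one i j))"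
proof (intro allI)
  fix i j
  show "aug_pow 4 (zf_sub (jacobian phi_gens i j) (mat_one i j))"
    by (cases i; cases j) (simp_all add: J_FF J_FT J_TF J_TT mat_one_def zf_one_zl zf_zero_zl zl_sub
      chk_sound[OF chk1] chk_sound[OF chk2] chk_sound[OF chk3(1)] chk_sound[OF chk3(2)])
qed



lemma sum_atMost_Suc_shift': "(\<Sum>i\<le>Suc n. f i) = f 0 + (\<Sum>i\<le>n. f (Suc i))" for f :: "nat \<Rightarrow> int"
  by (rule sum.atMost_Suc_shift)

lemma mag_split: "mag (l # w) (h # t) = mag_letter l [] * mag w (h # t) + (\<Sum>i\<le>length t. mag_letter l (h # take i t) * mag w (drop i t))"
  by (simp only: mag.simps length_Cons sum.atMost_Suc_shift take_0 drop_0 take_Suc_Cons drop_Suc_Cons)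

lemma magP: "mag ((g, False) # w) m = mag w m + (case m of [] \<Rightarrow> 0 | h # t \<Rightarrow> if h = g then mag w t else 0)"
proof (cases m)
  case Nil then show ?thesis by (simp add: mag_letter_def)
next
  case (Cons h t)
  have "(\<Sum>i\<le>length t. mag_letter (g, False) (h # take i t) * mag w (drop i t))
     = (\<Sum>i\<le>length t. if i = 0 then (if h = g then mag w t else 0) else 0)"
    by (rule sum.cong) (auto simp: mag_letter_def)
  also have "\<dots> = (if h = g then mag w t else 0)" by simp
  finally show ?thesis using Cons mag_split[of "(g, False)" w h t] by (simp add: mag_letter_def)
qed

lemma magN: "mag ((g, True) # w) m = mag w m + (case m of [] \<Rightarrow> 0 | h # t \<Rightarrow> if h = g then - mag ((g, True) # w) t else 0)"
proof (cases m)
  case Nil then show ?thesis by (simp add: mag_letter_def)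
next
  case (Cons h t)
  have "(\<Sum>i\<le>length t. mag_letter (g, True) (h # take i t) * mag w (drop i t))
     = (\<Sum>i\<le>length t. (if h = g then - (mag_letter (g, True) (take i t) * mag w (drop i t)) else 0))"
    by (rule sum.cong) (auto simp: mag_letter_def)
  also have "\<dots> = (if h = g then - mag ((g, True) # w) t else 0)"
    by (simp add: sum_negf)
  finally show ?thesis using Cons mag_split[of "(g, True)" w h t] by (simp add: mag_letter_def)
qed

lemma magNil: "mag [] m = (if m = [] then 1 else 0)" by simp

lemma mag_l_Nil: "mag (l # w) [] = mag w []"
  by (simp add: mag_letter_def)

lemma mag_l_Cons: "mag (l # w) (h # t) = (if snd l then mag w (h # t) + (if h = fst l then - mag (l # w) t else 0)
    else mag w (h # t) + (if h = fst l then mag w t else 0))"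
proof -
  obtain a b where l: "l = (a, b)" by (cases l)
  show ?thesis
  proof (cases b)
    case True
    show ?thesis using magN[of a w "h # t"] True unfolding l by (simp only: list.case fst_conv snd_conv if_True)
  next
    case False
    show ?thesis using magP[of a w "h # t"] False unfolding l by (simp only: list.case fst_conv snd_conv if_False)
  qed
qed

definition p4 :: "bool list \<Rightarrow> int" where
  "p4 m = (if m = [True, False, True, True] then -2 else if m = [True, True, False, True] then 1 else 0)"

lemma gamma_eq: "gamma p m = (if length m = 4 then p (last m # butlast m) else 0)"
proof -
  have "{w. length w = 4 \<and> rotate1 w = m} = (if length m = 4 then {last m # butlast m} else {})"
  proof (cases "length m = 4")
    case True
    have "length w = 4 \<and> rotate1 w = m \<longleftrightarrow> w = last m # butlast m" for w
    proof
      assume a: "length w = 4 \<and> rotate1 w = m"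
      then obtain x w' where "w = x # w'" by (cases w) auto
      with a show "w = last m # butlast m" by auto
    next
      assume "w = last m # butlast m"
      with True show "length w = 4 \<and> rotate1 w = m"
        by (cases m rule: rev_cases) auto
    qed
    with True show ?thesis by auto
  next
    case False
    then show ?thesis by auto
  qed
  then show ?thesis by (simp add: gamma_def)
qed

definition "Tl = (La @ negL [(1, [])]) @ ((1, []) # negL [(1, [])])"

lemma trace_zl: "mat_trace (\<lambda>i j. zf_sub (jacobian phi_gens i j) (mat_one i j)) = zl Tl"
  by (simp add: mat_trace_def J_FF J_TT mat_one_def zf_one_zl zl_sub zl_add Tl_def)

lemma len4: "length m = 4 \<Longrightarrow> \<exists>a b c d. m = [a, b, c, d]"
  by (cases m; simp; case_tac list; simp; case_tac lista; simp; case_tac listb; simp)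

lemma part5: "deg4_part (tau (mat_trace (\<lambda>i j. zf_sub (jacobian phi_gens i j) (mat_one i j)))) \<in> R4plus"
proof -
  have "deg4_part (tau (zl Tl)) = (\<lambda>m. p4 m - gamma p4 m)"
  proof
    fix m :: "bool list"
    show "deg4_part (tau (zl Tl)) m = p4 m - gamma p4 m"
    proof (cases "length m = 4")
      case False then show ?thesis by (auto simp: deg4_part_def p4_def gamma_eq)
    next
      case True
      then obtain a b c d where m: "m = [a, b, c, d]" using len4 by blast
      show ?thesis unfolding m
        by (cases a; cases b; cases c; cases d; simp add: deg4_part_def tau_zl Tl_def La_eq p4_def gamma_eq
          ev_def negL_def mag_l_Nil mag_l_Cons del: mag.simps(2))
    qed
  qed
  moreover have "p4 \<in> R4" by (auto simp: R4_def p4_def)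
  ultimately show ?thesis unfolding trace_zl R4plus_def by blast
qed


theorem mainTheorem13:
  shows "lcs 5 c_elem
    \<and> (\<forall>w. reduced w \<longrightarrow> lcs 5 (gmult (endo phi_gens w) (ginv w)))
    \<and> \<not> bij_betw (endo phi_gens) Fgrp Fgrp
    \<and> (\<forall>i j. aug_pow 4 (zf_sub (jacobian phi_gens i j) (mat_one i j)))
    \<and> deg4_part (tau (mat_trace (\<lambda>i j. zf_sub (jacobian phi_gens i j) (mat_one i j)))) \<in> R4plus
    \<and> \<not> mat_invertible (jacobian phi_gens)"
  using lcs5_c part2 part3 part4 part5 part6 by blast

end
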